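(* When run without a time budget, the main loop of MAPTree terminates after finitely many iterations.
   Context: Let $x_1,\dots,x_N\in\{0,1\}^F$ be a binary dataset $\mathcal X$ with labels $\mathcal Y\in\{0,1\}^N$, $[N]=\{1,\dots,N\}$. For $\mathcal I\subseteq[N]$, $f\in[F]$, $k\in\{0,1\}$ let $\mathcal I|_{f=k}=\{i\in\mathcal I:(x_i)_f=k\}$, $c^k(\mathcal I)=|\{i\in\mathcal I:y_i=k\}|$, $\mathcal V(\mathcal I)=\{f:\mathcal I|_{f=0}\neq\emptyset\text{ and }\mathcal I|_{f=1}\neq\emptyset\}$. Fix $\rho^1,\rho^0>0$, $\alpha\in(0,1)$, $\beta\ge0$; $\ell_{\rm leaf}(c^1,c^0)=B(c^1+\rho^1,c^0+\rho^0)/B(\rho^1,\rho^0)$ ($B$ the Beta function), $p_{\rm split}(d)=\alpha(1+d)^{-\beta}$, $p_{\rm leaf}(d,\mathcal I)=1$ if $\mathcal V(\mathcal I)=\emptyset$ else $1-p_{\rm split}(d)$, $p_{\rm inner}(d,\mathcal I)=0$ if $\mathcal V(\mathcal I)=\emptyset$ else $p_{\rm split}(d)/|\mathcal V(\mathcal I)|$; $-\log0=+\infty$, and a minimum over an empty set is $+\infty$. Graph $\mathcal G=\mathcal G_{\mathcal X,\mathcal Y}$: for nonempty $\mathcal I\subseteq[N]$, $d\in\{0,\dots,F\}$, an OR node $o_{\mathcal I,d}$ with terminal child $t_{\mathcal I,d}$ (edge cost $-\log p_{\rm leaf}(d,\mathcal I)-\log\ell_{\rm leaf}(c^1(\mathcal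 I),c^0(\mathcal I))$); for $d<F$, $f\in\mathcal V(\mathcal I)$, an AND child $a_{\mathcal I,d,f}$ (edge cost $-\log p_{\rm inner}(d,\mathcal I)$) with cost-$0$ edges to $o_{\mathcal I|_{f=0},d+1}$, $o_{\mathcal I|_{f=1},d+1}$; root $r=o_{[N],0}$; only nodes reachable from $r$ kept. Heuristic: $h(o_{\mathcal I,d})=-\max\{\log\ell_{\rm leaf}(c^1(\mathcal I),c^0(\mathcal I)),\log p_{\rm split}(d)+\log\ell_{\rm leaf}(c^1(\mathcal I),0)+\log\ell_{\rm leaf}(0,c^0(\mathcal I))\}$. MAPTree maintains a node set $\mathcal G'$, a set $\mathcal E$ of expanded OR nodes, and values $LB[u],UB[u]\in\mathbb R\cup\{+\infty\}$ for OR nodes ($UB[u]=+\infty$ until set); for an AND node $a$ with children $o_0,o_1$, $LB[a]=LB[o_0]+LB[o_1]$ and $UB[a]=UB[o_0]+UB[o_1]$. Initialize $\mathcal G'=\{r\}$, $\mathcal E=\emptyset$, $LB[r]=h(r)$, $UB[r]=+\infty$. While $LB[r]<UB[r]$ (and optionally while time remains): (1) $o:=r$; while $o\in\mathcal E$, choose an AND child $a^*$ of $o$ minimizing $\mathrm{cost}(o,a)+LB[a]$, with children $o_0$ (value-0 side) and $o_1$, and set $o:=o_0$ if $UB[o_0]-LB[o_0]>UB[o_1]-LB[o_1]$, else $o:=o_1$. (2) Add $o$ to $\mathcal E$ and its terminal child to $\mathcal G'$; for each AND child $a$ of $o$ with children $o_0,o_1$, add $a,o_0,o_1$ to $\mathcal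 G'$ and set $LB[o_0]:=h(o_0)$, $LB[o_1]:=h(o_1)$. (3) Starting from $Q=\{o\}$, repeatedly remove from $Q$ an OR node $u$ of maximal depth, compute $v=\min\{\min_a(\mathrm{cost}(u,a)+LB[a]),\mathrm{cost}(u,t_u)\}$ over the AND children $a$ and terminal child $t_u$ of $u$; if $v>LB[u]$, set $LB[u]:=v$ and add to $Q$ every OR node of $\mathcal G'$ that is the parent of an AND node of $\mathcal G'$ having $u$ as child. (4) The same with $UB$ in place of $LB$, updating when $v<UB[u]$. Output $\mathrm{getSolution}(r)$, where for an OR node $u$ with terminal child $t$: if $u$ has no AND child or $\mathrm{cost}(u,t)\le\min_a(\mathrm{cost}(u,a)+UB[a])$, return $\{u,t\}$; else, with $a^*$ attaining the minimum and children $u_0,u_1$, return $\{u,a^*\}\cup\mathrm{getSolution}(u_0)\cup\mathrm{getSolution}(u_1)$. *)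

theory Defs
  imports "HOL-Analysis.Analysis"
begin

(* An OR node o_{I,d} is represented by the pair (I,d); the AND node a_{I,d,f}
   by ANDn (I,d) f; the terminal node t_{I,d} by TERMn (I,d). *)
type_synonym ornode = "nat set \<times> nat"

datatype gnode = ORn ornode | ANDn ornode nat | TERMn ornode

(* control location of the algorithm (small-step semantics, incl. inner loops) *)
datatype phase =
    Check
  | Select ornode                       (* step (1), current node o *)
  | PropLB ornode "ornode set"          (* step (3): expanded node o, queue Q *)
  | PropUB "ornode set"                 (* step (4): queue Q *)
  | Done

record mstate =
  Gp :: "gnode set"
  Ex :: "ornode set"
  LB :: "ornode \<Rightarrow> ereal"
  UB :: "ornode \<Rightarrow> ereal"
  ph :: phase

definition mlog :: "real \<Rightarrow> ereal" where
  "mlog x = (if x = 0 then \<infinity> else ereal (- ln x))"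

(* Parameters: N, F; X i f  <->  (x_i)_f = 1 ; Y i <-> y_i = 1;
   r1 = rho^1, r0 = rho^0, al = alpha, be = beta. *)
locale maptree =
  fixes N F :: nat and X :: "nat \<Rightarrow> nat \<Rightarrow> bool" and Y :: "nat \<Rightarrow> bool"
    and r1 r0 al be :: real
begin

definition restr :: "nat set \<Rightarrow> nat \<Rightarrow> bool \<Rightarrow> nat set" where
  "restr I f k = {i \<in> I. X i f = k}"

definition cnt1 :: "nat set \<Rightarrow> nat" where "cnt1 I = card {i \<in> I. Y i}"
definition cnt0 :: "nat set \<Rightarrow> nat" where "cnt0 I = card {i \<in> I. \<not> Y i}"

definition V :: "nat set \<Rightarrow> nat set" where
  "V I = {f \<in> {1..F}. restr I f False \<noteq> {} \<and> restr I f True \<noteq> {}}"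

definition lleaf :: "nat \<Rightarrow> nat \<Rightarrow> real" where
  "lleaf c1 c0 = Beta (real c1 + r1) (real c0 + r0) / Beta r1 r0"

definition psplit :: "nat \<Rightarrow> real" where
  "psplit d = al * (1 + real d) powr (- be)"

definition pleaf :: "nat \<Rightarrow> nat set \<Rightarrow> real" where
  "pleaf d I = (if V I = {} then 1 else 1 - psplit d)"

definition pinner :: "nat \<Rightarrow> nat set \<Rightarrow> real" where
  "pinner d I = (if V I = {} then 0 else psplit d / real (card (V I)))"

(* features f such that the AND child a_{I,d,f} exists *)
definition andch :: "ornode \<Rightarrow> nat set" where
  "andch o' = {f. snd o' < F \<and> f \<in> V (fst o')}"

definition ch0 :: "ornode \<Rightarrow> nat \<Rightarrow> ornode" where
  "ch0 o' f = (restr (fst o') f False, Suc (snd o'))"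
definition ch1 :: "ornode \<Rightarrow> nat \<Rightarrow> ornode" where
  "ch1 o' f = (restr (fst o') f True, Suc (snd o'))"

definition cost_term :: "ornode \<Rightarrow> ereal" where
  "cost_term o' = mlog (pleaf (snd o') (fst o')) + mlog (lleaf (cnt1 (fst o')) (cnt0 (fst o')))"

definition cost_and :: "ornode \<Rightarrow> ereal" where
  "cost_and o' = mlog (pinner (snd o') (fst o'))"

definition h :: "ornode \<Rightarrow> real" where
  "h o' = - max (ln (lleaf (cnt1 (fst o')) (cnt0 (fst o'))))
                (ln (psplit (snd o')) + ln (lleaf (cnt1 (fst o')) 0) + ln (lleaf 0 (cnt0 (fst o'))))"

definition root :: ornode where "root = ({1..N}, 0)"

definition andval :: "(ornode \<Rightarrow> ereal) \<Rightarrow> ornode \<Rightarrow> nat \<Rightarrow> ereal" where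
  "andval B o' f = B (ch0 o' f) + B (ch1 o' f)"

(* v = min { min_a (cost(u,a) + B[a]), cost(u,t_u) }  (min over empty set = +infinity) *)
definition newval :: "(ornode \<Rightarrow> ereal) \<Rightarrow> ornode \<Rightarrow> ereal" where
  "newval B u = min (INF f\<in>andch u. cost_and u + andval B u f) (cost_term u)"

definition parents :: "mstate \<Rightarrow> ornode \<Rightarrow> ornode set" where
  "parents s u = {p. ORn p \<in> Gp s \<and> (\<exists>f. ANDn p f \<in> Gp s \<and> (ch0 p f = u \<or> ch1 p f = u))}"

(* step (2) *)
definition expand :: "mstate \<Rightarrow> ornode \<Rightarrow> mstate" where
  "expand s o' = s\<lparr> Ex := insert o' (Ex s),
     Gp := Gp s \<union> {TERMn o'} \<union> (\<Union>f\<in>andch o'. {ANDn o' f, ORn (ch0 o' f), ORn (ch1 o' f)}),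
     LB := (\<lambda>u. if (\<exists>f\<in>andch o'. u = ch0 o' f \<or> u = ch1 o' f) then ereal (h u) else LB s u) \<rparr>"

definition init :: mstate where
  "init = \<lparr> Gp = {ORn root}, Ex = {}, LB = (\<lambda>_. undefined)(root := ereal (h root)),
            UB = (\<lambda>_. \<infinity>), ph = Check \<rparr>"

(* One elementary step of MAPTree (all nondeterministic choices / tie-breaks allowed) *)
inductive step :: "mstate \<Rightarrow> mstate \<Rightarrow> bool" where
  check_go: "ph s = Check \<Longrightarrow> LB s root < UB s root \<Longrightarrow> step s (s\<lparr>ph := Select root\<rparr>)"
| check_stop: "ph s = Check \<Longrightarrow> \<not> LB s root < UB s root \<Longrightarrow> step s (s\<lparr>ph := Done\<rparr>)"
| select_down: "ph s = Select o' \<Longrightarrow> o' \<in> Ex s \<Longrightarrow> f \<in> andch o' \<Longrightarrow>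
     (\<forall>g\<in>andch o'. cost_and o' + andval (LB s) o' f \<le> cost_and o' + andval (LB s) o' g) \<Longrightarrow>
     step s (s\<lparr>ph := Select (if UB s (ch0 o' f) - LB s (ch0 o' f) > UB s (ch1 o' f) - LB s (ch1 o' f)
                                then ch0 o' f else ch1 o' f)\<rparr>)"
| select_expand: "ph s = Select o' \<Longrightarrow> o' \<notin> Ex s \<Longrightarrow>
     step s ((expand s o')\<lparr>ph := PropLB o' {o'}\<rparr>)"
| propLB: "ph s = PropLB o' Q \<Longrightarrow> u \<in> Q \<Longrightarrow> (\<forall>w\<in>Q. snd w \<le> snd u) \<Longrightarrow>
     step s (if newval (LB s) u > LB s u
             then s\<lparr>LB := (LB s)(u := newval (LB s) u), ph := PropLB o' (Q - {u} \<union> parents s u)\<rparr>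
             else s\<lparr>ph := PropLB o' (Q - {u})\<rparr>)"
| propLB_done: "ph s = PropLB o' {} \<Longrightarrow> step s (s\<lparr>ph := PropUB {o'}\<rparr>)"
| propUB: "ph s = PropUB Q \<Longrightarrow> u \<in> Q \<Longrightarrow> (\<forall>w\<in>Q. snd w \<le> snd u) \<Longrightarrow>
     step s (if newval (UB s) u < UB s u
             then s\<lparr>UB := (UB s)(u := newval (UB s) u), ph := PropUB (Q - {u} \<union> parents s u)\<rparr>
             else s\<lparr>ph := PropUB (Q - {u})\<rparr>)"
| propUB_done: "ph s = PropUB {} \<Longrightarrow> step s (s\<lparr>ph := Check\<rparr>)"

end

end

theory Submission
  imports Defs "HOL-Library.Multiset_Order"
begin

definition dm :: "ornode set \<Rightarrow> nat multiset" where
  "dm Q = image_mset snd (mset_set Q)"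

lemma dm_dec:
  assumes "finite Q" "finite P" "u \<in> Q" "\<forall>p\<in>P. snd p < snd u"
  shows "dm (Q - {u} \<union> P) < dm Q"
proof -
  define A where "A = Q - {u}"
  define P' where "P' = P - A"
  have eq: "Q - {u} \<union> P = A \<union> P'" unfolding A_def P'_def by blast
  have dis: "A \<inter> P' = {}" unfolding P'_def by blast
  have fA: "finite A" "finite P'" using assms unfolding A_def P'_def by auto
  have "mset_set (A \<union> P') = mset_set A + mset_set P'"
    using mset_set_Union[OF fA dis] .
  hence d1: "dm (Q - {u} \<union> P) = dm A + dm P'" unfolding eq dm_def by simp
  have "Q = insert u A" "u \<notin> A" using assms unfolding A_def by auto
  hence "mset_set Q = add_mset u (mset_set A)" using fA by simp
  hence d2: "dm Q = dm A + {#snd u#}" unfolding dm_def by simp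
  have "multp (<) (dm A + dm P') (dm A + {#snd u#})"
    by (rule one_step_implies_multp) (use assms fA in \<open>auto simp: dm_def P'_def\<close>)
  thus ?thesis unfolding d1 d2 less_multiset_def .
qed

context maptree
begin

definition U :: "ornode set" where
  "U = {p. fst p \<subseteq> {1..N} \<and> snd p \<le> F}"

lemma finite_U: "finite U"
proof -
  have "U \<subseteq> Pow {1..N} \<times> {..F}" unfolding U_def by auto
  thus ?thesis by (rule finite_subset) auto
qed

definition Inv :: "mstate \<Rightarrow> bool" where
  "Inv s \<longleftrightarrow> finite (Gp s) \<and> Ex s \<subseteq> U \<and>
     (\<forall>o'. ph s = Select o' \<longrightarrow> o' \<in> U) \<and>
     (\<forall>o' Q. ph s = PropLB o' Q \<longrightarrow> finite Q) \<and>
     (\<forall>Q. ph s = PropUB Q \<longrightarrow> finite Q)"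

fun cls :: "phase \<Rightarrow> nat" where
  "cls (PropLB _ _) = 3" | "cls (PropUB _) = 2" | "cls Check = 1" | "cls _ = 0"

fun msr :: "phase \<Rightarrow> nat multiset" where
  "msr (PropLB _ Q) = dm Q" | "msr (PropUB Q) = dm Q" | "msr _ = {#}"

fun sel :: "phase \<Rightarrow> nat" where
  "sel (Select o') = F - snd o'" | "sel _ = 0"

definition rank :: "mstate \<Rightarrow> nat \<times> nat \<times> nat multiset \<times> nat" where
  "rank s = (card (U - Ex s), cls (ph s), msr (ph s), sel (ph s))"

definition R :: "(mstate \<times> mstate) set" where
  "R = inv_image (less_than <*lex*> (less_than <*lex*> ({(M, N). M < N} <*lex*> less_than))) rank"

lemma wf_R: "wf R"
  unfolding R_def
  by (intro wf_inv_image wf_lex_prod wf_less_than wf_less_multiset)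

lemma Inv_init: "Inv init"
  unfolding Inv_def init_def root_def U_def by auto

lemma parents_depth: "p \<in> parents s u \<Longrightarrow> snd p < snd u"
  unfolding parents_def ch0_def ch1_def by auto

lemma finite_parents: "finite (Gp s) \<Longrightarrow> finite (parents s u)"
proof -
  assume "finite (Gp s)"
  hence "finite (ORn -` Gp s)" by (rule finite_vimageI) (simp add: inj_def)
  moreover have "parents s u \<subseteq> ORn -` Gp s" unfolding parents_def by auto
  ultimately show ?thesis by (rule finite_subset[rotated])
qed

lemma finite_andch: "finite (andch o')"
proof -
  have "andch o' \<subseteq> {1..F}" unfolding andch_def V_def by auto
  thus ?thesis by (rule finite_subset) auto
qed

lemma step_dec:
  assumes "step s s'" "Inv s"
  shows "Inv s' \<and> (s', s) \<in> R"
  using assms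
proof (induction rule: step.induct)
  case (check_go s)
  then show ?case by (auto simp: Inv_def R_def rank_def root_def U_def)
next
  case (check_stop s)
  then show ?case by (auto simp: Inv_def R_def rank_def)
next
  case (select_down s o' f)
  have "o' \<in> U" using select_down by (auto simp: Inv_def)
  moreover have "snd o' < F" using select_down(3) by (auto simp: andch_def)
  ultimately have "ch0 o' f \<in> U" "ch1 o' f \<in> U"
    by (auto simp: U_def ch0_def ch1_def restr_def)
  moreover have "snd (ch0 o' f) = Suc (snd o')" "snd (ch1 o' f) = Suc (snd o')"
    by (auto simp: ch0_def ch1_def)
  ultimately show ?case using select_down \<open>snd o' < F\<close>
    by (auto simp: Inv_def R_def rank_def)
next
  case (select_expand s o')
  have oU: "o' \<in> U" using select_expand by (auto simp: Inv_def)
  have "card (U - insert o' (Ex s)) < card (U - Ex s)"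
  proof -
    have "U - insert o' (Ex s) = (U - Ex s) - {o'}" by blast
    moreover have "o' \<in> U - Ex s" using oU select_expand by blast
    ultimately show ?thesis using finite_U
      by (metis card_Diff1_less finite_Diff)
  qed
  moreover have "finite (Gp (expand s o'))"
    using select_expand(3) finite_andch[of o'] by (auto simp: Inv_def expand_def)
  ultimately show ?case using select_expand oU
    by (auto simp: Inv_def R_def rank_def expand_def)
next
  case (propLB s o' Q u)
  have fQ: "finite Q" using propLB by (auto simp: Inv_def)
  have fP: "finite (parents s u)" using propLB finite_parents by (auto simp: Inv_def)
  have d1: "dm (Q - {u} \<union> parents s u) < dm Q"
    by (rule dm_dec[OF fQ fP propLB(2)]) (auto dest: parents_depth)
  have d2: "dm (Q - {u} \<union> {}) < dm Q"
    by (rule dm_dec[OF fQ _ propLB(2)]) auto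
  show ?case using propLB fQ fP d1 d2 by (auto simp: Inv_def R_def rank_def)
next
  case (propLB_done s o')
  then show ?case by (auto simp: Inv_def R_def rank_def)
next
  case (propUB s Q u)
  have fQ: "finite Q" using propUB by (auto simp: Inv_def)
  have fP: "finite (parents s u)" using propUB finite_parents by (auto simp: Inv_def)
  have d1: "dm (Q - {u} \<union> parents s u) < dm Q"
    by (rule dm_dec[OF fQ fP propUB(2)]) (auto dest: parents_depth)
  have d2: "dm (Q - {u} \<union> {}) < dm Q"
    by (rule dm_dec[OF fQ _ propUB(2)]) auto
  show ?case using propUB fQ fP d1 d2 by (auto simp: Inv_def R_def rank_def)
next
  case (propUB_done s)
  then show ?case by (auto simp: Inv_def R_def rank_def)
qed

lemma no_inf_run:
  "\<not> (\<exists>run. run 0 = init \<and> (\<forall>n. step (run n) (run (Suc n))))"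
proof
  assume "\<exists>run. run 0 = init \<and> (\<forall>n. step (run n) (run (Suc n)))"
  then obtain run where r0: "run 0 = init" and rs: "\<forall>n. step (run n) (run (Suc n))" by blast
  have I: "Inv (run n)" for n
    by (induction n) (use r0 Inv_init rs step_dec in auto)
  have "(run (Suc n), run n) \<in> R" for n using step_dec rs I by blast
  thus False using wf_R unfolding wf_iff_no_infinite_down_chain by blast
qed

end

theorem theorem9:
  fixes N F :: nat and X :: "nat \<Rightarrow> nat \<Rightarrow> bool" and Y :: "nat \<Rightarrow> bool"
    and r1 r0 al be :: real
  assumes "0 < N" and "0 < r1" and "0 < r0" and "0 < al" and "al < 1" and "0 \<le> be"
  shows "\<not> (\<exists>run :: nat \<Rightarrow> mstate. run 0 = maptree.init N Y r1 r0 al be \<and>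
              (\<forall>n. maptree.step N F X Y r1 r0 al be (run n) (run (Suc n))))"
  by (rule maptree.no_inf_run)

end
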